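(* Let $p>2$ be a prime and $m\geq3$ an integer with $\gcd(p,m)=1$. Let $u$ be the multiplicative order of $p$ modulo $2m$. Let $\zeta_4$ and $\zeta_{2m}$ be a primitive $4$-th and a primitive $2m$-th root of unity, respectively, in an algebraic closure of $\mathbb{Z}_p$, let $s$ be an integer with $\gcd(s,m)=1$, and let $\delta$ be the degree of the minimal polynomial of $\zeta_4(\zeta_{2m}^s+\zeta_{2m}^{-s})$ over $\mathbb{Z}_p$. Then: - $\delta=u/2$ if ($p\equiv1\pmod4$, $u$ even, and $p^{u/2}\equiv-1\pmod{2m}$), or ($p\equiv3\pmod4$, $u\equiv0\pmod4$, and $p^{u/2}\equiv-1\pmod{2m}$), or ($p\equiv3\pmod4$, $u\equiv2\pmod4$, and $p^{u/2}\equiv m\pm1\pmod{2m}$); - $\delta=u$ if ($p\equiv1\pmod4$, $u$ even, and $p^{u/2}\not\equiv-1\pmod{2m}$), or ($p\equiv1\pmod4$ and $u$ odd), or ($p\equiv3\pmod4$, $u\equiv0\pmod4$, and $p^{u/2}\not\equiv-1\pmod{2m}$), or ($p\equiv3\pmod4$, $u\equiv2\pmod4$, and $p^{u/2}\not\equiv m\pm1\pmod{2m}$); - $\delta=2u$ if $p\equiv3\pmod4$ and $u$ is odd.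
   Context: $\mathbb{Z}_p$ denotes the field with $p$ elements. (For orientation: the elements $\zeta_4(\zeta_{2m}^s+\zeta_{2m}^{-s})$ with $1\le s\le m$, $\gcd(s,m)=1$, are the roots of the reduction modulo $p$ of the fibotomic polynomial $\Psi_m(x)=\prod_{1\le s\le m,\ \gcd(s,m)=1}(x-2i\cos(\pi s/m))$.) *)

theory Defs
  imports "HOL-Number_Theory.Number_Theory" "HOL-Computational_Algebra.Polynomial"
begin

definition prim_root_unity :: "nat \<Rightarrow> 'a::field \<Rightarrow> bool" where
  "prim_root_unity k z \<longleftrightarrow> z ^ k = 1 \<and> (\<forall>j. 0 < j \<and> j < k \<longrightarrow> z ^ j \<noteq> 1)"

text \<open>Polynomials whose coefficients lie in the prime subfield (the image of the integers).\<close>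
definition prime_field_poly :: "'a::field poly \<Rightarrow> bool" where
  "prime_field_poly q \<longleftrightarrow> (\<forall>i. coeff q i \<in> range (of_int :: int \<Rightarrow> 'a))"

definition min_poly_degree :: "'a::field \<Rightarrow> nat" where
  "min_poly_degree x = (LEAST d. \<exists>q. q \<noteq> 0 \<and> prime_field_poly q \<and> degree q = d \<and> poly q x = 0)"

definition is_alg_closure_of_prime_field :: "'a::field itself \<Rightarrow> bool" where
  "is_alg_closure_of_prime_field _ \<longleftrightarrow>
     (\<forall>q::'a poly. 0 < degree q \<longrightarrow> (\<exists>z. poly q z = 0)) \<and>
     (\<forall>x::'a. \<exists>q. q \<noteq> 0 \<and> prime_field_poly q \<and> poly q x = 0)"

end

theory Submission
  imports Defs
begin


lemma frob_add: fixes a b :: "'a::field" assumes "prime CHAR('a)"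
  shows "(a + b) ^ (CHAR('a) ^ k) = a ^ (CHAR('a) ^ k) + b ^ (CHAR('a) ^ k)"
  using freshmans_dream'[OF assms] by blast

lemma frob_neg: fixes a :: "'a::field" assumes "prime CHAR('a)"
  shows "(- a) ^ CHAR('a) = - (a ^ CHAR('a))"
  using minus_power_prime_CHAR[OF refl assms] .

lemma frob_diff: fixes a b :: "'a::field" assumes "prime CHAR('a)"
  shows "(a - b) ^ (CHAR('a) ^ k) = a ^ (CHAR('a) ^ k) - b ^ (CHAR('a) ^ k)"
proof -
  have "a ^ (CHAR('a) ^ k) = ((a - b) + b) ^ (CHAR('a) ^ k)" by simp
  also have "\<dots> = (a - b) ^ (CHAR('a) ^ k) + b ^ (CHAR('a) ^ k)" by (rule frob_add[OF assms])
  finally show ?thesis by (simp add: algebra_simps)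
qed

lemma frob_inj: fixes a b :: "'a::field" assumes "prime CHAR('a)"
  and "a ^ (CHAR('a) ^ k) = b ^ (CHAR('a) ^ k)" shows "a = b"
proof -
  have "(a - b) ^ (CHAR('a) ^ k) = 0" using frob_diff[OF assms(1)] assms(2) by simp
  thus ?thesis by simp
qed

lemma frob_of_nat: assumes "prime CHAR('a::field)"
  shows "(of_nat n :: 'a) ^ CHAR('a) = of_nat n"
proof (induction n)
  case 0 then show ?case using assms prime_gt_0_nat by (simp add: power_0_left)
next
  case (Suc n)
  have "(of_nat (Suc n) :: 'a) ^ CHAR('a) = (of_nat n + 1) ^ CHAR('a)" by (simp add: add.commute)
  also have "\<dots> = of_nat n ^ CHAR('a) + 1 ^ CHAR('a)"
    using frob_add[OF assms, of "of_nat n" 1 1] by simp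
  finally show ?case using Suc by (simp add: add.commute)
qed

lemma frob_of_int: assumes "prime CHAR('a::field)"
  shows "(of_int n :: 'a) ^ CHAR('a) = of_int n"
proof (cases "n \<ge> 0")
  case True
  then have "n = int (nat n)" by simp
  then obtain k where "n = int k" by blast
  then show ?thesis using frob_of_nat[OF assms] by simp
next
  case False
  then have "n = - int (nat (- n))" by simp
  then obtain k where "n = - int k" by blast
  then show ?thesis using frob_of_nat[OF assms, of k] frob_neg[OF assms] by simp
qed

lemma prime_field_fixed: fixes c :: "'a::field" assumes "prime CHAR('a)"
  and "c ^ CHAR('a) = c" shows "c \<in> range (of_int :: int \<Rightarrow> 'a)"
proof (rule ccontr)
  assume nc: "c \<notin> range (of_int :: int \<Rightarrow> 'a)"
  define P :: "'a poly" where "P = monom 1 (CHAR('a)) + [:0, -1:]"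
  have pg: "CHAR('a) \<ge> 2" using assms prime_ge_2_nat by blast
  have degP: "degree P = CHAR('a)" unfolding P_def
    using pg by (subst degree_add_eq_left) (auto simp: degree_monom_eq)
  hence P0: "P \<noteq> 0" using pg by auto
  have roots: "poly P y = 0 \<longleftrightarrow> y ^ CHAR('a) = y" for y
    unfolding P_def by (simp add: poly_monom)
  have "insert c ((\<lambda>k. of_nat k :: 'a) ` {..<CHAR('a)}) \<subseteq> {y. poly P y = 0}"
  proof
    fix y assume "y \<in> insert c ((\<lambda>k. of_nat k :: 'a) ` {..<CHAR('a)})"
    then have "y = c \<or> (\<exists>k. y = of_nat k)" by blast
    then have "y ^ CHAR('a) = y" using assms(2) frob_of_nat[OF assms(1)] by blast
    then show "y \<in> {y. poly P y = 0}" using roots by blast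
  qed
  hence "card (insert c ((\<lambda>k. of_nat k :: 'a) ` {..<CHAR('a)})) \<le> card {y. poly P y = 0}"
    using poly_roots_finite[OF P0] by (intro card_mono) auto
  also have "\<dots> \<le> CHAR('a)" using card_poly_roots_bound[OF P0] degP by simp
  finally have le: "card (insert c ((\<lambda>k. of_nat k :: 'a) ` {..<CHAR('a)})) \<le> CHAR('a)" .
  have inj: "inj_on (\<lambda>k. of_nat k :: 'a) {..<CHAR('a)}"
  proof (rule inj_onI)
    fix i j assume "i \<in> {..<CHAR('a)}" "j \<in> {..<CHAR('a)}" "(of_nat i :: 'a) = of_nat j"
    then have "[i = j] (mod CHAR('a))" using of_nat_eq_iff_cong_CHAR[of i j] by blast
    then show "i = j" using \<open>i \<in> {..<CHAR('a)}\<close> \<open>j \<in> {..<CHAR('a)}\<close> by (simp add: cong_def)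
  qed
  have "c \<notin> (\<lambda>k. of_nat k :: 'a) ` {..<CHAR('a)}"
  proof
    assume "c \<in> (\<lambda>k. of_nat k :: 'a) ` {..<CHAR('a)}"
    then obtain k where "c = of_nat k" by blast
    then have "c = of_int (int k)" by simp
    with nc show False by blast
  qed
  hence "card (insert c ((\<lambda>k. of_nat k :: 'a) ` {..<CHAR('a)})) = Suc (card ((\<lambda>k. of_nat k :: 'a) ` {..<CHAR('a)}))"
    by (intro card_insert_disjoint) auto
  moreover have "card ((\<lambda>k. of_nat k :: 'a) ` {..<CHAR('a)}) = CHAR('a)"
    using card_image[OF inj] by (simp only: card_lessThan)
  ultimately show False using le by linarith
qed

lemma coeff_linear_mult: fixes a :: "'a::comm_ring_1" shows "coeff ([:a, 1:] * q) j = (if j = 0 then a * coeff q 0 else coeff q (j - 1) + a * coeff q j)"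
  by (cases j) (auto simp: algebra_simps)

lemma frob_coeff_prod: fixes f :: "nat \<Rightarrow> 'a::field" assumes "prime CHAR('a)" "finite A"
  shows "coeff (\<Prod>i\<in>A. [:- (f i ^ CHAR('a)), 1:]) j = (coeff (\<Prod>i\<in>A. [:- f i, 1:]) j) ^ CHAR('a)"
  using assms(2)
proof (induction A arbitrary: j rule: finite_induct)
  case empty
  then show ?case using assms(1) prime_gt_0_nat by (cases j) (auto simp: power_0_left)
next
  case (insert a A)
  have fd: "(x + y) ^ CHAR('a) = x ^ CHAR('a) + y ^ CHAR('a)" for x y :: 'a
    using frob_add[OF assms(1), of x y 1] by simp
  have fdm: "(x - y) ^ CHAR('a) = x ^ CHAR('a) - y ^ CHAR('a)" for x y :: 'a
    using frob_diff[OF assms(1), of x y 1] by simp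
  have e: "(u + w * v) ^ CHAR('a) = u ^ CHAR('a) + w ^ CHAR('a) * v ^ CHAR('a)" for u w v :: 'a
    by (simp only: fd power_mult_distrib)
  have e0: "(w * v) ^ CHAR('a) = w ^ CHAR('a) * v ^ CHAR('a)" for w v :: 'a
    by (simp only: power_mult_distrib)
  have fn: "(- f a) ^ CHAR('a) = - (f a ^ CHAR('a))" by (rule frob_neg[OF assms(1)])
  show ?case
  proof (cases j)
    case 0
    then show ?thesis unfolding prod.insert[OF insert.hyps] coeff_linear_mult
      by (simp only: simp_thms if_True e0 fn insert.IH)
  next
    case (Suc n)
    then show ?thesis unfolding prod.insert[OF insert.hyps] coeff_linear_mult
      by (simp only: Suc_not_Zero if_False diff_Suc_1 e fn insert.IH)
  qed
qed

lemma poly_frob: fixes q :: "'a::field poly" assumes "prime CHAR('a)" "prime_field_poly q"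
  shows "poly q (y ^ CHAR('a)) = (poly q y) ^ CHAR('a)"
proof -
  have "(poly q y) ^ CHAR('a) = (\<Sum>i\<le>degree q. (coeff q i * y ^ i) ^ CHAR('a))"
    unfolding poly_altdef by (rule freshmans_dream_sum[OF assms(1) refl])
  also have "\<dots> = (\<Sum>i\<le>degree q. coeff q i * (y ^ CHAR('a)) ^ i)"
  proof (rule sum.cong[OF refl])
    fix i
    obtain k where "coeff q i = of_int k" using assms(2) unfolding prime_field_poly_def by blast
    then show "(coeff q i * y ^ i) ^ CHAR('a) = coeff q i * (y ^ CHAR('a)) ^ i"
    proof -
      have "(y ^ i) ^ CHAR('a) = (y ^ CHAR('a)) ^ i" by (metis power_mult mult.commute)
      then show ?thesis using frob_of_int[OF assms(1), of k] \<open>coeff q i = of_int k\<close>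
        by (simp only: power_mult_distrib)
    qed
  qed
  finally show ?thesis by (simp add: poly_altdef)
qed

lemma min_poly_degree_orbit:
  fixes x :: "'a::field"
  assumes pr: "prime CHAR('a)" and d: "d > 0" and fx: "x ^ (CHAR('a) ^ d) = x"
    and mn: "\<And>j. 0 < j \<Longrightarrow> j < d \<Longrightarrow> x ^ (CHAR('a) ^ j) \<noteq> x"
  shows "min_poly_degree x = d"
proof -
  let ?p = "CHAR('a)"
  define g where "g i = [:- (x ^ (?p ^ i)), 1:]" for i
  define Q where "Q = (\<Prod>i<d. g i)"
  have g0: "g i \<noteq> 0" for i unfolding g_def by simp
  have Q0: "Q \<noteq> 0" unfolding Q_def using g0 by simp
  have degQ: "degree Q = d" unfolding Q_def using g0
    by (subst degree_prod_eq_sum_degree) (auto simp: g_def)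
  have rootQ: "poly Q x = 0" unfolding Q_def poly_prod using d
    by (subst prod_zero_iff) (auto intro!: bexI[of _ 0] simp: g_def)
  have shift: "(\<Prod>i<d. g (Suc i)) = Q"
  proof -
    have "g 0 * (\<Prod>i<d. g (Suc i)) = Q * g d" unfolding Q_def by (metis prod.lessThan_Suc prod.lessThan_Suc_shift)
    also have "g d = g 0" using fx by (simp add: g_def)
    finally show ?thesis using g0[of 0] by (simp add: mult.commute)
  qed
  have pfQ: "prime_field_poly Q" unfolding prime_field_poly_def
  proof
    fix j
    have "coeff Q j ^ ?p = coeff (\<Prod>i<d. [:- ((x ^ (?p ^ i)) ^ ?p), 1:]) j"
      unfolding Q_def g_def by (rule frob_coeff_prod[OF pr, symmetric]) simp
    also have "(\<Prod>i<d. [:- ((x ^ (?p ^ i)) ^ ?p), 1:]) = (\<Prod>i<d. g (Suc i))"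
      unfolding g_def by (intro prod.cong refl) (simp add: power_mult[symmetric] mult.commute)
    finally have "coeff Q j ^ ?p = coeff Q j" using shift by simp
    then show "coeff Q j \<in> range of_int" by (rule prime_field_fixed[OF pr])
  qed
  have lower: "d \<le> degree q" if q0: "q \<noteq> 0" and pq: "prime_field_poly q" and rq: "poly q x = 0" for q
  proof -
    have r: "poly q (x ^ (?p ^ i)) = 0" for i
    proof (induction i)
      case 0 then show ?case using rq by simp
    next
      case (Suc i)
      have "x ^ (?p ^ Suc i) = (x ^ (?p ^ i)) ^ ?p" by (metis power_Suc2 power_mult)
      then show ?case using poly_frob[OF pr pq] Suc pr prime_gt_0_nat by (simp add: power_0_left)
    qed
    have inj: "inj_on (\<lambda>i. x ^ (?p ^ i)) {..<d}"
    proof -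
      have "i = j" if ij: "i < d" "j < d" "i \<le> j" "x ^ (?p ^ i) = x ^ (?p ^ j)" for i j
      proof (rule ccontr)
        assume "i \<noteq> j"
        have "?p ^ j = ?p ^ (j - i) * ?p ^ i" using ij(3) by (simp flip: power_add)
        hence "x ^ (?p ^ j) = (x ^ (?p ^ (j - i))) ^ (?p ^ i)" by (simp add: power_mult)
        hence "x ^ (?p ^ (j - i)) = x" using frob_inj[OF pr] ij(4) by metis
        moreover have "0 < j - i" "j - i < d" using ij \<open>i \<noteq> j\<close> by auto
        ultimately show False using mn by blast
      qed
      note * = this
      show ?thesis
      proof (rule inj_onI)
        fix i j assume a: "i \<in> {..<d}" "j \<in> {..<d}" "x ^ (?p ^ i) = x ^ (?p ^ j)"
        show "i = j"
        proof (cases "i \<le> j")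
          case True then show ?thesis using * a by simp
        next
          case False then show ?thesis using *[of j i] a by simp
        qed
      qed
    qed
    have "d = card ((\<lambda>i. x ^ (?p ^ i)) ` {..<d})" using card_image[OF inj] by simp
    also have "\<dots> \<le> card {y. poly q y = 0}"
      using r poly_roots_finite[OF q0] by (intro card_mono) auto
    also have "\<dots> \<le> degree q" by (rule card_poly_roots_bound[OF q0])
    finally show ?thesis .
  qed
  show ?thesis unfolding min_poly_degree_def
  proof (rule Least_equality)
    show "\<exists>q. q \<noteq> 0 \<and> prime_field_poly q \<and> degree q = d \<and> poly q x = 0"
      using Q0 pfQ degQ rootQ by blast
  next
    fix e assume "\<exists>q. q \<noteq> 0 \<and> prime_field_poly q \<and> degree q = e \<and> poly q x = 0"
    then show "d \<le> e" using lower by blast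
  qed
qed



lemma powi_eq_1_iff:
  fixes z :: "'a::field"
  assumes pr: "prim_root_unity n z" and n: "n > 0"
  shows "z powi k = 1 \<longleftrightarrow> int n dvd k"
proof -
  have zn: "z ^ n = 1" using pr unfolding prim_root_unity_def by blast
  have z0: "z \<noteq> 0"
  proof
    assume "z = 0" then show False using zn n by (simp add: power_0_left)
  qed
  define r where "r = k mod int n"
  define q where "q = k div int n"
  have k: "k = int n * q + r" unfolding r_def q_def by simp
  have r0: "0 \<le> r" "r < int n" unfolding r_def using n by auto
  have "z powi k = (z powi (int n)) powi q * z powi r"
    unfolding k using z0 by (simp add: power_int_add power_int_mult)
  also have "\<dots> = z ^ nat r" using zn r0 by (simp add: power_int_nonneg_exp)
  finally have e: "z powi k = z ^ nat r" .
  have "z ^ nat r = 1 \<longleftrightarrow> nat r = 0"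
    using pr r0 unfolding prim_root_unity_def by (metis nat_less_iff neq0_conv power_0)
  moreover have "int n dvd k \<longleftrightarrow> r = 0" unfolding r_def by auto
  ultimately show ?thesis using e r0 by auto
qed

lemma powi_eq_iff:
  fixes z :: "'a::field"
  assumes pr: "prim_root_unity n z" and n: "n > 0"
  shows "z powi a = z powi b \<longleftrightarrow> int n dvd a - b"
proof -
  have zn: "z ^ n = 1" using pr unfolding prim_root_unity_def by blast
  have z0: "z \<noteq> 0"
  proof
    assume "z = 0" then show False using zn n by (simp add: power_0_left)
  qed
  have "z powi (a - b) = z powi a / z powi b" using z0 by (simp add: power_int_diff)
  moreover have "z powi b \<noteq> 0" using z0 by simp
  ultimately have "z powi a = z powi b \<longleftrightarrow> z powi (a - b) = 1" by (auto simp: field_simps)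
  then show ?thesis using powi_eq_1_iff[OF pr n] by simp
qed

lemma half_root:
  fixes z :: "'a::field"
  assumes pr: "prim_root_unity (2*m) z" and m: "m > 0"
  shows "z ^ m = -1"
proof -
  have "(z ^ m) ^ 2 = 1" using pr unfolding prim_root_unity_def by (simp add: power_mult[symmetric] mult.commute)
  moreover have "z ^ m \<noteq> 1" using pr m unfolding prim_root_unity_def by auto
  ultimately show ?thesis by (simp add: power2_eq_1_iff)
qed

lemma z4_pow:
  fixes z4 :: "'a::field"
  assumes pr: "prim_root_unity 4 z4"
  shows "n mod 4 = 1 \<Longrightarrow> z4 ^ n = z4" and "n mod 4 = 3 \<Longrightarrow> z4 ^ n = - z4"
proof -
  have z4: "z4 ^ 4 = 1" using pr unfolding prim_root_unity_def by blast
  have "z4 ^ 2 = -1" using half_root[of 2 z4] pr by simp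
  have e: "z4 ^ n = z4 ^ (n mod 4)"
  proof -
    have "z4 ^ n = z4 ^ (4 * (n div 4) + n mod 4)" by simp
    also have "\<dots> = (z4 ^ 4) ^ (n div 4) * z4 ^ (n mod 4)" by (simp only: power_add power_mult)
    finally have "z4 ^ n = (z4 ^ 4) ^ (n div 4) * z4 ^ (n mod 4)" .
    then show ?thesis using z4 by simp
  qed
  show "n mod 4 = 1 \<Longrightarrow> z4 ^ n = z4" using e by simp
  have "z4 ^ 3 = z4 ^ 2 * z4" by (simp add: power2_eq_square power3_eq_cube)
  then have "z4 ^ 3 = - z4" using \<open>z4 ^ 2 = -1\<close> by simp
  then show "n mod 4 = 3 \<Longrightarrow> z4 ^ n = - z4" using e by simp
qed

lemma inv_sum_eq:
  fixes y v :: "'a::field"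
  assumes "y \<noteq> 0" "v \<noteq> 0"
  shows "y + inverse y = v + inverse v \<longleftrightarrow> y = v \<or> y = inverse v"
proof
  assume h: "y + inverse y = v + inverse v"
  have "(y - v) * (y * v - 1) = y * v * ((y + inverse y) - (v + inverse v))"
    using assms by (simp add: field_simps)
  also have "\<dots> = 0" using h by simp
  finally have "y = v \<or> y * v = 1" by simp
  then show "y = v \<or> y = inverse v" using assms by (auto simp: field_simps)
qed auto

lemma dvd_even_coprime:
  fixes s t M :: int
  assumes "even t" "coprime s M"
  shows "2 * M dvd s * t \<longleftrightarrow> 2 * M dvd t"
proof -
  obtain r where t: "t = 2 * r" using assms(1) by blast
  have "2 * M dvd s * t \<longleftrightarrow> M dvd s * r" unfolding t by (simp add: mult.left_commute)
  also have "\<dots> \<longleftrightarrow> M dvd r" using assms(2) by (simp add: coprime_dvd_mult_right_iff coprime_commute)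
  also have "\<dots> \<longleftrightarrow> 2 * M dvd t" unfolding t by simp
  finally show ?thesis .
qed

lemma dvd_even_coprime_m:
  fixes s t M :: int
  assumes "even t" "coprime s M" "M > 0"
  shows "2 * M dvd s * t - M \<longleftrightarrow> 2 * M dvd t - M"
proof
  assume h: "2 * M dvd s * t - M"
  then have "M dvd s * t - M" by (rule dvd_trans[rotated]) simp
  then have "M dvd (s * t - M) + M" by (rule dvd_add) simp
  then have "M dvd s * t" by simp
  then have "M dvd t" using assms(2) by (simp add: coprime_dvd_mult_right_iff coprime_commute)
  then obtain w where w: "t = M * w" by blast
  have "s * t - M = M * (s * w - 1)" unfolding w by (simp add: algebra_simps)
  with h have "M * 2 dvd M * (s * w - 1)" by (simp add: mult.commute)
  then have "2 dvd s * w - 1" using assms(3) by (subst (asm) dvd_times_left_cancel_iff) auto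
  then have "odd w" by auto
  then have "2 * M dvd M * (w - 1)" by (simp add: mult.commute)
  then show "2 * M dvd t - M" unfolding w by (simp add: algebra_simps)
next
  assume h: "2 * M dvd t - M"
  then obtain v where "t - M = 2 * M * v" by blast
  then have w: "t = M * (2 * v + 1)" by (simp add: algebra_simps)
  then have "even M" using assms(1) by simp
  then have "odd s" using coprime_common_divisor[OF assms(2), of 2] by auto
  have "s * t - M = M * (s * (2 * v + 1) - 1)" unfolding w by (simp add: algebra_simps)
  moreover have "even (s * (2 * v + 1) - 1)" using \<open>odd s\<close> by simp
  ultimately show "2 * M dvd s * t - M" by (simp add: mult.commute)
qed



lemma x_frob:
  fixes z4 z :: "'a::field" and p m k :: nat and s :: int
  assumes pr: "prime CHAR('a)" and cp: "CHAR('a) = p" and po: "odd p" and m: "m > 0"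
    and r4: "prim_root_unity 4 z4" and rz: "prim_root_unity (2*m) z"
  shows "(z4 * (z powi s + z powi (-s))) ^ (p ^ k) = z4 * (z powi s + z powi (-s)) \<longleftrightarrow>
     ((int p ^ k) mod 4 = 1 \<and> (int (2*m) dvd s * int p ^ k - s \<or> int (2*m) dvd s * int p ^ k + s)) \<or>
     ((int p ^ k) mod 4 = 3 \<and> (int (2*m) dvd s * int p ^ k - (s + int m) \<or> int (2*m) dvd s * int p ^ k + (s + int m)))"
proof -
  define N where "N = int p ^ k"
  have zn: "z ^ (2*m) = 1" using rz unfolding prim_root_unity_def by blast
  have z0: "z \<noteq> 0"
  proof
    assume "z = 0" then show False using zn m by (simp add: power_0_left)
  qed
  have z4n: "z4 ^ 4 = 1" using r4 unfolding prim_root_unity_def by blast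
  have z40: "z4 \<noteq> 0"
  proof
    assume "z4 = 0" then show False using z4n by simp
  qed
  have ee: "z powi a = z powi b \<longleftrightarrow> int (2*m) dvd a - b" for a b
    using powi_eq_iff[OF rz] m by simp
  define A where "A = z powi (s * N)"
  define B where "B = z powi s"
  have A0: "A \<noteq> 0" and B0: "B \<noteq> 0" using z0 by (auto simp: A_def B_def)
  have iA: "z powi (- s * N) = inverse A" unfolding A_def by (simp add: power_int_minus[symmetric])
  have iB: "z powi (- s) = inverse B" unfolding B_def by (simp add: power_int_minus[symmetric])
  have pw: "(z powi t) ^ (p ^ k) = z powi (t * N)" for t
    by (simp add: power_int_power' N_def)
  have "(z4 * (z powi s + z powi (-s))) ^ (p ^ k) = z4 ^ (p ^ k) * ((z powi s) ^ (p ^ k) + (z powi (-s)) ^ (p ^ k))"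
    using frob_add[OF pr, of "z powi s" "z powi (-s)" k] cp by (simp add: power_mult_distrib)
  also have "\<dots> = z4 ^ (p ^ k) * (A + inverse A)" using pw[of s] pw[of "-s"] iA by (simp add: A_def)
  finally have fx: "(z4 * (z powi s + z powi (-s))) ^ (p ^ k) = z4 ^ (p ^ k) * (A + inverse A)" .
  have x: "z4 * (z powi s + z powi (-s)) = z4 * (B + inverse B)" using iB by (simp add: B_def)
  have Nm: "N mod 4 = int ((p ^ k) mod 4)" unfolding N_def by (simp add: zmod_int)
  have "odd (p ^ k)" using po by simp
  then have "(p ^ k) mod 4 = 1 \<or> (p ^ k) mod 4 = 3" by presburger
  then show ?thesis
  proof
    assume h: "(p ^ k) mod 4 = 1"
    then have "z4 ^ (p ^ k) = z4" by (rule z4_pow(1)[OF r4])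
    then have "(z4 * (z powi s + z powi (-s))) ^ (p ^ k) = z4 * (z powi s + z powi (-s))
        \<longleftrightarrow> A + inverse A = B + inverse B" using fx x z40 by simp
    also have "\<dots> \<longleftrightarrow> A = B \<or> A = inverse B" by (rule inv_sum_eq[OF A0 B0])
    also have "\<dots> \<longleftrightarrow> int (2*m) dvd s * N - s \<or> int (2*m) dvd s * N + s"
    proof -
      have "A = inverse B \<longleftrightarrow> A = z powi (-s)" using iB by simp
      then show ?thesis by (simp add: A_def B_def ee)
    qed
    finally show ?thesis using h Nm by (simp add: N_def)
  next
    assume h: "(p ^ k) mod 4 = 3"
    then have "z4 ^ (p ^ k) = - z4" by (rule z4_pow(2)[OF r4])
    define C where "C = z powi (s + int m)"
    have "C = B * z ^ m" unfolding C_def B_def using z0 by (simp add: power_int_add)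
    then have C: "C = - B" using half_root[OF rz m] by simp
    have iC: "z powi (- (s + int m)) = inverse C" unfolding C_def by (simp add: power_int_minus[symmetric])
    have C0: "C \<noteq> 0" using C B0 by simp
    have "(z4 * (z powi s + z powi (-s))) ^ (p ^ k) = z4 * (z powi s + z powi (-s))
        \<longleftrightarrow> z4 * (- (A + inverse A)) = z4 * (B + inverse B)"
    proof -
      have "(z4 * (z powi s + z powi (-s))) ^ (p ^ k) = z4 * (- (A + inverse A))"
        using fx \<open>z4 ^ (p ^ k) = - z4\<close> by (simp add: algebra_simps)
      then show ?thesis unfolding x by simp
    qed
    also have "\<dots> \<longleftrightarrow> - (A + inverse A) = B + inverse B" using z40 by simp
    also have "\<dots> \<longleftrightarrow> A + inverse A = C + inverse C" 
    proof -
      have cc: "C + inverse C = - (B + inverse B)" using C by (simp add: inverse_minus_eq)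
      show ?thesis unfolding cc by (metis minus_minus)
    qed
    also have "\<dots> \<longleftrightarrow> A = C \<or> A = inverse C" by (rule inv_sum_eq[OF A0 C0])
    also have "\<dots> \<longleftrightarrow> int (2*m) dvd s * N - (s + int m) \<or> int (2*m) dvd s * N + (s + int m)"
    proof -
      have "A = inverse C \<longleftrightarrow> A = z powi (- (s + int m))" using iC by simp
      moreover have "s * N - (- (s + int m)) = s * N + (s + int m)" by simp
      ultimately show ?thesis by (simp only: A_def C_def ee)
    qed
    finally show ?thesis using h Nm by (simp add: N_def)
  qed
qed



lemma cond_conv:
  fixes N s :: int and m :: nat
  assumes o: "odd N" and c: "coprime s (int m)" and m: "m > 0"
  shows "int (2*m) dvd s*N - s \<longleftrightarrow> [N = 1] (mod int (2*m))"
    and "int (2*m) dvd s*N + s \<longleftrightarrow> [N = -1] (mod int (2*m))"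
    and "int (2*m) dvd s*N - (s + int m) \<longleftrightarrow> [N = int m + 1] (mod int (2*m))"
    and "int (2*m) dvd s*N + (s + int m) \<longleftrightarrow> [N = int m - 1] (mod int (2*m))"
proof -
  have i2: "int (2*m) = 2 * int m" by simp
  have e1: "even (N - 1)" "even (N + 1)" using o by auto
  have mp: "int m > 0" using m by simp
  have "s*N - s = s*(N-1)" by (simp add: algebra_simps)
  then show "int (2*m) dvd s*N - s \<longleftrightarrow> [N = 1] (mod int (2*m))"
    unfolding i2 cong_iff_dvd_diff using dvd_even_coprime[OF e1(1) c] by simp
  have "s*N + s = s*(N+1)" by (simp add: algebra_simps)
  then show "int (2*m) dvd s*N + s \<longleftrightarrow> [N = -1] (mod int (2*m))"
    unfolding i2 cong_iff_dvd_diff using dvd_even_coprime[OF e1(2) c] by simp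
  have r1: "s*N - (s + int m) = s*(N-1) - int m" and r2: "N - (int m + 1) = (N - 1) - int m" by (simp_all add: algebra_simps)
  show "int (2*m) dvd s*N - (s + int m) \<longleftrightarrow> [N = int m + 1] (mod int (2*m))"
    unfolding i2 cong_iff_dvd_diff r1 r2 by (rule dvd_even_coprime_m[OF e1(1) c mp])
  have a: "s*N + (s + int m) = (s*(N+1) - int m) + 2 * int m" "N - (int m - 1) = (N + 1) - int m"
    by (simp_all add: algebra_simps)
  have "2 * int m dvd (s*(N+1) - int m) + 2 * int m \<longleftrightarrow> 2 * int m dvd s*(N+1) - int m"
    by (rule dvd_add_left_iff) simp
  then show "int (2*m) dvd s*N + (s + int m) \<longleftrightarrow> [N = int m - 1] (mod int (2*m))"
    unfolding i2 cong_iff_dvd_diff a using dvd_even_coprime_m[OF e1(2) c mp] by (simp only:)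
qed

lemma sq_cong_one:
  fixes N :: int and m :: nat
  assumes o: "odd N" and m: "m > 0"
    and h: "[N = 1] (mod int (2*m)) \<or> [N = -1] (mod int (2*m)) \<or>
            [N = int m + 1] (mod int (2*m)) \<or> [N = int m - 1] (mod int (2*m))"
  shows "[N ^ 2 = 1] (mod int (2*m))"
  using h
proof (elim disjE)
  assume "[N = 1] (mod int (2*m))"
  then show ?thesis using cong_pow[of N 1 _ 2] by simp
next
  assume "[N = -1] (mod int (2*m))"
  then show ?thesis using cong_pow[of N "-1" _ 2] by simp
next
  assume h: "[N = int m + 1] (mod int (2*m))"
  then have "int (2*m) dvd N - (int m + 1)" by (simp add: cong_iff_dvd_diff)
  moreover have "(2::int) dvd int (2*m)" by simp
  ultimately have "even (N - (int m + 1))" by (metis dvd_trans)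
  then have "even (int m)" using o by simp
  then obtain t where t: "int m = 2 * t" by blast
  have "[N ^ 2 = (int m + 1) ^ 2] (mod int (2*m))" using cong_pow[OF h] .
  moreover have "[(int m + 1) ^ 2 = 1] (mod int (2*m))"
    unfolding cong_iff_dvd_diff
  proof -
    have "(int m + 1) ^ 2 - 1 = (2 * int m) * (t + 1)" using t by (simp add: power2_eq_square algebra_simps)
    then show "int (2*m) dvd (int m + 1) ^ 2 - 1" by simp
  qed
  ultimately show ?thesis by (rule cong_trans)
next
  assume h: "[N = int m - 1] (mod int (2*m))"
  then have "int (2*m) dvd N - (int m - 1)" by (simp add: cong_iff_dvd_diff)
  moreover have "(2::int) dvd int (2*m)" by simp
  ultimately have "even (N - (int m - 1))" by (metis dvd_trans)
  then have "even (int m)" using o by simp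
  then obtain t where t: "int m = 2 * t" by blast
  have "[N ^ 2 = (int m - 1) ^ 2] (mod int (2*m))" using cong_pow[OF h] .
  moreover have "[(int m - 1) ^ 2 = 1] (mod int (2*m))"
    unfolding cong_iff_dvd_diff
  proof -
    have "(int m - 1) ^ 2 - 1 = (2 * int m) * (t - 1)" using t by (simp add: power2_eq_square algebra_simps)
    then show "int (2*m) dvd (int m - 1) ^ 2 - 1" by simp
  qed
  ultimately show ?thesis by (rule cong_trans)
qed

lemma one_not_half:
  fixes N :: int and m :: nat
  assumes m: "m \<ge> 3" and h1: "[N = 1] (mod int (2*m))"
  shows "\<not> [N = int m + 1] (mod int (2*m))" and "\<not> [N = int m - 1] (mod int (2*m))"
proof -
  show "\<not> [N = int m + 1] (mod int (2*m))"
  proof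
    assume "[N = int m + 1] (mod int (2*m))"
    then have "[1 = int m + 1] (mod int (2*m))" by (rule cong_trans[OF cong_sym[OF h1]])
    then have "int (2*m) dvd int m" unfolding cong_iff_dvd_diff by (simp add: dvd_diff_commute)
    then have "2 * m dvd m" by (simp only: of_nat_dvd_iff)
    then show False using nat_dvd_not_less[of m "2*m"] m by simp
  qed
  show "\<not> [N = int m - 1] (mod int (2*m))"
  proof
    assume "[N = int m - 1] (mod int (2*m))"
    then have "[1 = int m - 1] (mod int (2*m))" by (rule cong_trans[OF cong_sym[OF h1]])
    then have d: "int (2*m) dvd int m - 2" unfolding cong_iff_dvd_diff by (simp add: dvd_diff_commute algebra_simps)
    have "int m - 2 > 0" "int m - 2 < int (2*m)" using m by auto
    then show False using d by (meson zdvd_not_zless)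
  qed
qed



theorem mainTheorem15:
  fixes p m :: nat and s :: int and z4 z2m :: "'a::field"
  assumes "prime p" and "p > 2" and "m \<ge> 3" and "coprime p m"
    and "CHAR('a) = p" and "is_alg_closure_of_prime_field TYPE('a)"
    and "prim_root_unity 4 z4" and "prim_root_unity (2*m) z2m"
    and "coprime s (int m)"
  defines "u \<equiv> ord (2*m) p"
    and "\<delta> \<equiv> min_poly_degree (z4 * (z2m powi s + z2m powi (-s)))"
  shows
    "(((p mod 4 = 1 \<and> even u \<and> [int p ^ (u div 2) = -1] (mod int (2*m))) \<or>
      (p mod 4 = 3 \<and> u mod 4 = 0 \<and> [int p ^ (u div 2) = -1] (mod int (2*m))) \<or>
      (p mod 4 = 3 \<and> u mod 4 = 2 \<and> ([int p ^ (u div 2) = int m + 1] (mod int (2*m)) \<or>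
                                       [int p ^ (u div 2) = int m - 1] (mod int (2*m)))))
     \<longrightarrow> \<delta> = u div 2) \<and>
    (((p mod 4 = 1 \<and> even u \<and> \<not> [int p ^ (u div 2) = -1] (mod int (2*m))) \<or>
      (p mod 4 = 1 \<and> odd u) \<or>
      (p mod 4 = 3 \<and> u mod 4 = 0 \<and> \<not> [int p ^ (u div 2) = -1] (mod int (2*m))) \<or>
      (p mod 4 = 3 \<and> u mod 4 = 2 \<and> \<not> ([int p ^ (u div 2) = int m + 1] (mod int (2*m)) \<or>
                                       [int p ^ (u div 2) = int m - 1] (mod int (2*m)))))
     \<longrightarrow> \<delta> = u) \<and>
    ((p mod 4 = 3 \<and> odd u) \<longrightarrow> \<delta> = 2 * u)"
proof -
  define x where "x = z4 * (z2m powi s + z2m powi (-s))"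
  define Q where "Q d \<longleftrightarrow> (int p ^ d mod 4 = 1 \<and> ([int p ^ d = 1] (mod int (2*m)) \<or> [int p ^ d = -1] (mod int (2*m)))) \<or>
      (int p ^ d mod 4 = 3 \<and> ([int p ^ d = int m + 1] (mod int (2*m)) \<or> [int p ^ d = int m - 1] (mod int (2*m))))" for d
  have pr: "prime CHAR('a)" using assms(1,5) by simp
  have po: "odd p" using prime_odd_nat assms(1,2) by blast
  have m0: "m > 0" using assms(3) by simp
  have oN: "odd (int p ^ d)" for d using po by simp
  have hQ: "x ^ (p ^ d) = x \<longleftrightarrow> Q d" for d
    using x_frob[OF pr assms(5) po m0 assms(7) assms(8), of s d] cond_conv[OF oN assms(9) m0, of d]
    unfolding x_def Q_def by simp
  have key: "\<delta> = t" if t0: "t > 0" and Qt: "Q t" and mn: "\<And>j. 0 < j \<Longrightarrow> j < t \<Longrightarrow> \<not> Q j" for t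
  proof -
    have "min_poly_degree x = t"
    proof (rule min_poly_degree_orbit[OF pr t0])
      show "x ^ CHAR('a) ^ t = x" using hQ Qt assms(5) by simp
      show "x ^ CHAR('a) ^ j \<noteq> x" if "0 < j" "j < t" for j using hQ mn[OF that] assms(5) by simp
    qed
    then show ?thesis unfolding \<delta>_def x_def .
  qed
  have cop: "coprime (2*m) p" using po assms(4) by (simp add: coprime_commute)
  have u0: "u > 0" using cop by (simp add: u_def)
  have one: "[int p ^ d = 1] (mod int (2*m)) \<longleftrightarrow> u dvd d" for d
  proof -
    have "[int p ^ d = 1] (mod int (2*m)) \<longleftrightarrow> [int (p ^ d) = int 1] (mod int (2*m))" by simp
    also have "\<dots> \<longleftrightarrow> [p ^ d = Suc 0] (mod (2*m))" by (simp only: cong_int_iff One_nat_def)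
    also have "\<dots> \<longleftrightarrow> u dvd d" unfolding u_def by (rule ord_divides')
    finally show ?thesis .
  qed
  have Q2: "u dvd 2 * d" if "Q d" for d
  proof -
    have h: "[int p ^ d = 1] (mod int (2*m)) \<or> [int p ^ d = -1] (mod int (2*m)) \<or>
            [int p ^ d = int m + 1] (mod int (2*m)) \<or> [int p ^ d = int m - 1] (mod int (2*m))"
      using that unfolding Q_def by blast
    have "[(int p ^ d) ^ 2 = 1] (mod int (2*m))" by (rule sq_cong_one[OF oN m0 h])
    moreover have "(int p ^ d) ^ 2 = int p ^ (2 * d)" by (simp add: power_mult[symmetric] mult.commute)
    ultimately show ?thesis using one by simp
  qed
  have md4: "p mod 4 = 1 \<or> p mod 4 = 3" using po by presburger
  have m41: "int p ^ d mod 4 = 1" if "p mod 4 = 1" for d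
  proof -
    have "int p mod 4 = int (p mod 4)" by (simp add: of_nat_mod)
    then have "[int p = 1] (mod 4)" unfolding cong_def using that by simp
    then have "[int p ^ d = 1 ^ d] (mod 4)" by (rule cong_pow)
    then show ?thesis by (simp add: cong_def)
  qed
  have m43: "int p ^ d mod 4 = (if even d then 1 else 3)" if "p mod 4 = 3" for d
  proof -
    have "int p mod 4 = int (p mod 4)" by (simp add: of_nat_mod)
    then have "[int p = -1] (mod 4)" unfolding cong_def using that by simp
    then have c: "[int p ^ d = (-1) ^ d] (mod 4)" by (rule cong_pow)
    show ?thesis
    proof (cases "even d")
      case True then show ?thesis using c by (simp add: cong_def)
    next
      case False then show ?thesis using c by (simp add: cong_def)
    qed
  qed
  show ?thesis
  proof (intro conjI impI)
    show "\<delta> = u div 2" if H: "(p mod 4 = 1 \<and> even u \<and> [int p ^ (u div 2) = -1] (mod int (2*m))) \<or>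
      (p mod 4 = 3 \<and> u mod 4 = 0 \<and> [int p ^ (u div 2) = -1] (mod int (2*m))) \<or>
      (p mod 4 = 3 \<and> u mod 4 = 2 \<and> ([int p ^ (u div 2) = int m + 1] (mod int (2*m)) \<or>
                                       [int p ^ (u div 2) = int m - 1] (mod int (2*m))))"
    proof -
      have A: "even u \<and> Q (u div 2)"
        using H
      proof (elim disjE conjE)
        assume "p mod 4 = 1" "even u" "[int p ^ (u div 2) = -1] (mod int (2*m))"
        then show ?thesis using m41[of "u div 2"] unfolding Q_def by simp
      next
        assume a: "p mod 4 = 3" "u mod 4 = 0" "[int p ^ (u div 2) = -1] (mod int (2*m))"
        have "even u" "even (u div 2)" using a(2) by presburger+
        then show ?thesis using m43[OF a(1), of "u div 2"] a(3) unfolding Q_def by simp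
      next
        assume a: "p mod 4 = 3" "u mod 4 = 2" "[int p ^ (u div 2) = int m + 1] (mod int (2*m))"
        have "even u" "odd (u div 2)" using a(2) by presburger+
        then show ?thesis using m43[OF a(1), of "u div 2"] a(3) unfolding Q_def by simp
      next
        assume a: "p mod 4 = 3" "u mod 4 = 2" "[int p ^ (u div 2) = int m - 1] (mod int (2*m))"
        have "even u" "odd (u div 2)" using a(2) by presburger+
        then show ?thesis using m43[OF a(1), of "u div 2"] a(3) unfolding Q_def by simp
      qed
      have t0: "u div 2 > 0" using A u0 by auto
      show ?thesis
      proof (rule key[OF t0])
        show "Q (u div 2)" using A by blast
        fix j assume j: "0 < j" "j < u div 2"
        show "\<not> Q j"
        proof
          assume "Q j"
          then have "u dvd 2 * j" by (rule Q2)
          then have "u \<le> 2 * j" using j by (intro dvd_imp_le) auto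
          with j A show False by auto
        qed
      qed
    qed
  next
    show "\<delta> = u" if H: "(p mod 4 = 1 \<and> even u \<and> \<not> [int p ^ (u div 2) = -1] (mod int (2*m))) \<or>
      (p mod 4 = 1 \<and> odd u) \<or>
      (p mod 4 = 3 \<and> u mod 4 = 0 \<and> \<not> [int p ^ (u div 2) = -1] (mod int (2*m))) \<or>
      (p mod 4 = 3 \<and> u mod 4 = 2 \<and> \<not> ([int p ^ (u div 2) = int m + 1] (mod int (2*m)) \<or>
                                       [int p ^ (u div 2) = int m - 1] (mod int (2*m))))"
    proof (rule key[OF u0])
      have "int p ^ u mod 4 = 1"
      proof (cases "p mod 4 = 1")
        case True then show ?thesis by (rule m41)
      next
        case False
        then have p3: "p mod 4 = 3" using md4 by simp
        have "even u" using H False by (elim disjE conjE) (simp_all, presburger+)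
        then show ?thesis using m43[OF p3, of u] by simp
      qed
      moreover have "[int p ^ u = 1] (mod int (2*m))" using one by simp
      ultimately show "Q u" unfolding Q_def by simp
    next
      fix j assume j: "0 < j" "j < u"
      show "\<not> Q j"
      proof
        assume Qj: "Q j"
        then have "u dvd 2 * j" by (rule Q2)
        then obtain k where k: "2 * j = u * k" by blast
        have "k \<noteq> 0"
        proof
          assume "k = 0" with k j show False by simp
        qed
        moreover have "k < 2"
        proof -
          have "u * k < u * 2" using k j by linarith
          then show "k < 2" using u0 by simp
        qed
        ultimately have "k = 1" by simp
        with k have uj: "u = 2 * j" by simp
        then have jd: "j = u div 2" by simp
        have nd: "\<not> u dvd j" using j by (auto dest: dvd_imp_le)
        show False
          using H
        proof (elim disjE conjE)
          assume a: "p mod 4 = 1" "even u" "\<not> [int p ^ (u div 2) = -1] (mod int (2*m))"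
          then show False using Qj m41[OF a(1), of j] one[of j] nd unfolding Q_def jd by simp
        next
          assume "p mod 4 = 1" "odd u" then show False using uj by simp
        next
          assume a: "p mod 4 = 3" "u mod 4 = 0" "\<not> [int p ^ (u div 2) = -1] (mod int (2*m))"
          have "even (u div 2)" using a(2) by presburger
          then show False using Qj m43[OF a(1), of j] one[of j] nd a(3) unfolding Q_def jd by simp
        next
          assume a: "p mod 4 = 3" "u mod 4 = 2" "\<not> ([int p ^ (u div 2) = int m + 1] (mod int (2*m)) \<or>
                                       [int p ^ (u div 2) = int m - 1] (mod int (2*m)))"
          have "odd (u div 2)" using a(2) by presburger
          then show False using Qj m43[OF a(1), of j] a(3) unfolding Q_def jd by simp
        qed
      qed
    qed
  next
    assume H: "p mod 4 = 3 \<and> odd u"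
    show "\<delta> = 2 * u"
    proof (rule key)
      show "0 < 2 * u" using u0 by simp
      show "Q (2 * u)" using m43[of "2*u"] H one[of "2*u"] unfolding Q_def by simp
      fix j assume j: "0 < j" "j < 2 * u"
      show "\<not> Q j"
      proof
        assume Qj: "Q j"
        then have "u dvd j * 2" using Q2 by (simp add: mult.commute)
        moreover have "coprime u 2" using H by simp
        ultimately have "u dvd j" using coprime_dvd_mult_left_iff by blast
        then obtain k where k: "j = u * k" by blast
        have "k \<noteq> 0"
        proof
          assume "k = 0" with k j show False by simp
        qed
        moreover have "k < 2"
        proof -
          have "u * k < u * 2" using k j by linarith
          then show "k < 2" using u0 by simp
        qed
        ultimately have "j = u" using k by (cases k) auto
        then have o1: "[int p ^ j = 1] (mod int (2*m))" and o3: "int p ^ j mod 4 = 3"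
          using one[of j] m43[of j] H by auto
        show False using Qj o3 one_not_half[OF assms(3) o1] unfolding Q_def by simp
      qed
    qed
  qed
qed

end
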